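(* Let $v$ be a relaxation enhancing flow on the closed subspace $\mathcal{Y}\subset L^2(\pi)$ (see context). Let $\rho_0$ be an initial probability density with $q_0=\rho_0/\pi$ satisfying $0<c_1\le q_0\le c_2<\infty$ and $q_0-1\in\mathcal{Y}$. Then for any given $B>0$ and $t>0$ there is $A_0$ such that whenever $A>A_0$, \[ H(t)\le H_0\exp(-Bt), \] where $H(t)=\int q(t)\log q(t)\,\pi\,dx$ and $H_0=H(0)$.
   Context: Let $\Omega=\mathbb{T}^d$ or $\mathbb{R}^d$, and let $U\in C^2(\Omega)$; if $\Omega=\mathbb{R}^d$ assume moreover $\lim_{|x|\to\infty}\big(\tfrac12|\nabla U(x)|^2-\Delta U(x)\big)=+\infty$. Let $\pi\propto e^{-U}$ be the corresponding probability density. A flow is a vector field $v$ on $\Omega$ with $\nabla\cdot(v e^{-U})=0$. For $A\ge0$ let $\mathcal{L}_A=\Delta-\nabla U\cdot\nabla-Av\cdot\nabla$ acting on $L^2(\pi)$. Let $\mathcal{X}=\{\phi\in L^2(\pi):\int\phi\,\pi\,dx=0\}$ and let $\mathcal{Y}\subset\mathcal{X}$ be a closed subspace (with the $L^2(\pi)$ norm) that is invariant under the semigroup $e^{t\mathcal{L}_A}$ for every $A\ge0$. The flow $v$ is called relaxation enhancing (on $\mathcal{Y}$) if for every $\tau>0$ and $\delta>0$ there exists $A(\tau,\delta)>0$ such that $\|e^{\tau\mathcal{L}_A}\|_{\mathcal{Y}\to\mathcal{Y}}<\delta$ for all $A\ge A(\tau,\delta)$. Let $\rho(t)$ be the law at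 time $t$ of $dX_t=Av(X_t)\,dt-\nabla U(X_t)\,dt+\sqrt2\,dW_t$ with $X_0\sim\rho_0$; then $q(t)=\rho(t)/\pi$ solves $\partial_t q=\mathcal{L}_A q$, $q(0)=q_0$, and $H(t)=\mathcal{H}(\rho(t)\mid\pi)=\int q\log q\,\pi\,dx$ is the relative entropy. *)

theory Defs
  imports "HOL-Analysis.Analysis"
begin

text \<open>Space dimension d = DIM('a); points of \<Omega> are elements of 'a :: euclidean_space.
  The flag tor selects \<Omega> = T^d (functions are Z^d-periodic on R^d, integrals over the
  unit cube) or \<Omega> = R^d (integrals over all of R^d).\<close>

definition periodic :: "('a::euclidean_space \<Rightarrow> 'b) \<Rightarrow> bool" where
  "periodic f \<longleftrightarrow> (\<forall>x. \<forall>i\<in>Basis. f (x + i) = f x)"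

definition omega :: "bool \<Rightarrow> 'a::euclidean_space set" where
  "omega tor = (if tor then cbox 0 One else UNIV)"

definition pderiv :: "('a::euclidean_space \<Rightarrow> real) \<Rightarrow> 'a \<Rightarrow> 'a \<Rightarrow> real" where
  "pderiv f i x = frechet_derivative f (at x) i"

definition grad :: "('a::euclidean_space \<Rightarrow> real) \<Rightarrow> 'a \<Rightarrow> 'a" where
  "grad f x = (\<Sum>i\<in>Basis. pderiv f i x *\<^sub>R i)"

definition lap :: "('a::euclidean_space \<Rightarrow> real) \<Rightarrow> 'a \<Rightarrow> real" where
  "lap f x = (\<Sum>i\<in>Basis. pderiv (\<lambda>y. pderiv f i y) i x)"

definition divg :: "('a::euclidean_space \<Rightarrow> 'a) \<Rightarrow> 'a \<Rightarrow> real" where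
  "divg F x = (\<Sum>i\<in>Basis. pderiv (\<lambda>y. F y \<bullet> i) i x)"

definition C2 :: "('a::euclidean_space \<Rightarrow> real) \<Rightarrow> bool" where
  "C2 f \<longleftrightarrow> (\<forall>x. f differentiable (at x))
     \<and> (\<forall>i\<in>Basis. \<forall>x. (\<lambda>y. pderiv f i y) differentiable (at x))
     \<and> (\<forall>i\<in>Basis. \<forall>j\<in>Basis. continuous_on UNIV (\<lambda>x. pderiv (\<lambda>y. pderiv f i y) j x))"

definition C1_field :: "('a::euclidean_space \<Rightarrow> 'a) \<Rightarrow> bool" where
  "C1_field F \<longleftrightarrow> (\<forall>x. F differentiable (at x))
     \<and> (\<forall>i\<in>Basis. \<forall>j\<in>Basis. continuous_on UNIV (\<lambda>x. pderiv (\<lambda>y. F y \<bullet> i) j x))"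

definition Zc :: "bool \<Rightarrow> ('a::euclidean_space \<Rightarrow> real) \<Rightarrow> real" where
  "Zc tor U = (LINT y:omega tor|lborel. exp (- U y))"

definition piU :: "bool \<Rightarrow> ('a::euclidean_space \<Rightarrow> real) \<Rightarrow> 'a \<Rightarrow> real" where
  "piU tor U x = exp (- U x) / Zc tor U"

definition inL2 :: "bool \<Rightarrow> ('a::euclidean_space \<Rightarrow> real) \<Rightarrow> ('a \<Rightarrow> real) \<Rightarrow> bool" where
  "inL2 tor U \<phi> \<longleftrightarrow> \<phi> \<in> borel_measurable lborel \<and> (tor \<longrightarrow> periodic \<phi>)
     \<and> set_integrable lborel (omega tor) (\<lambda>x. (\<phi> x)\<^sup>2 * piU tor U x)"

definition L2norm :: "bool \<Rightarrow> ('a::euclidean_space \<Rightarrow> real) \<Rightarrow> ('a \<Rightarrow> real) \<Rightarrow> real" where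
  "L2norm tor U \<phi> = sqrt (LINT x:omega tor|lborel. (\<phi> x)\<^sup>2 * piU tor U x)"

definition Xsp :: "bool \<Rightarrow> ('a::euclidean_space \<Rightarrow> real) \<Rightarrow> ('a \<Rightarrow> real) set" where
  "Xsp tor U = {\<phi>. inL2 tor U \<phi> \<and> (LINT x:omega tor|lborel. \<phi> x * piU tor U x) = 0}"

definition closed_subspace :: "bool \<Rightarrow> ('a::euclidean_space \<Rightarrow> real) \<Rightarrow> ('a \<Rightarrow> real) set \<Rightarrow> bool" where
  "closed_subspace tor U Y \<longleftrightarrow> Y \<subseteq> Xsp tor U \<and> (\<lambda>x. 0) \<in> Y
     \<and> (\<forall>f\<in>Y. \<forall>g\<in>Y. (\<lambda>x. f x + g x) \<in> Y)
     \<and> (\<forall>f\<in>Y. \<forall>c::real. (\<lambda>x. c * f x) \<in> Y)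
     \<and> (\<forall>F \<phi>. (\<forall>n. F n \<in> Y) \<and> inL2 tor U \<phi>
          \<and> (\<lambda>n. L2norm tor U (\<lambda>x. F n x - \<phi> x)) \<longlonglongrightarrow> 0 \<longrightarrow> \<phi> \<in> Y)"

text \<open>Solutions of d/dt q = L_A q = lap q - grad U . grad q - A v . grad q:
  classical for t > 0, in L^2(pi) and continuous in L^2(pi) on [0,\<infinity>).
  The semigroup e^(t L_A) applied to q 0 is q t.\<close>

definition is_sol :: "bool \<Rightarrow> ('a::euclidean_space \<Rightarrow> real) \<Rightarrow> ('a \<Rightarrow> 'a) \<Rightarrow> real
    \<Rightarrow> (real \<Rightarrow> 'a \<Rightarrow> real) \<Rightarrow> bool" where
  "is_sol tor U v A q \<longleftrightarrow>
     (\<forall>t\<ge>0. inL2 tor U (q t))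
   \<and> (\<forall>t\<ge>0. ((\<lambda>s. L2norm tor U (\<lambda>x. q s x - q t x)) \<longlongrightarrow> 0) (at t within {0..}))
   \<and> (\<forall>t>0. C2 (q t))
   \<and> (\<forall>t>0. \<forall>x. ((\<lambda>s. q s x) has_real_derivative
          (lap (q t) x - grad U x \<bullet> grad (q t) x - A * (v x \<bullet> grad (q t) x))) (at t))"

text \<open>Relaxation enhancing: for all tau, delta > 0 there is A(tau,delta) > 0 such that
  the operator norm of e^(tau L_A) on Y is < delta for all A \<ge> A(tau,delta).\<close>

definition relax_enh :: "bool \<Rightarrow> ('a::euclidean_space \<Rightarrow> real) \<Rightarrow> ('a \<Rightarrow> 'a)
    \<Rightarrow> ('a \<Rightarrow> real) set \<Rightarrow> bool" where
  "relax_enh tor U v Y \<longleftrightarrow>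
     (\<forall>\<tau>>0. \<forall>\<delta>>0. \<exists>A1>0. \<forall>A\<ge>A1. \<exists>c<\<delta>. \<forall>q. is_sol tor U v A q \<and> q 0 \<in> Y
        \<longrightarrow> L2norm tor U (q \<tau>) \<le> c * L2norm tor U (q 0))"

definition entropy :: "bool \<Rightarrow> ('a::euclidean_space \<Rightarrow> real) \<Rightarrow> ('a \<Rightarrow> real) \<Rightarrow> real" where
  "entropy tor U q = (LINT x:omega tor|lborel. q x * ln (q x) * piU tor U x)"

end

theory Submission
  imports Defs
begin


lemma ln_lower: "0 < (x::real) \<Longrightarrow> 1 - 1/x \<le> ln x"
proof -
  assume x: "0 < x"
  have "ln (1/x) \<le> 1/x - 1" using x by (intro ln_le_minus_one) simp
  moreover have "ln (1/x) = - ln x" using x by (simp add: ln_div)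
  ultimately show ?thesis by simp
qed

lemma xlnx_upper: "(q::real) * ln q \<le> (q - 1) + 2 * (q - 1)^2"
proof (cases "q > 0")
  case True
  have "ln q \<le> q - 1" using True by (rule ln_le_minus_one)
  hence "q * ln q \<le> q * (q - 1)" using True by (simp add: mult_left_mono)
  moreover have "0 \<le> (q - 1)^2" by simp
  ultimately show ?thesis by (simp add: power2_eq_square algebra_simps)
next
  case False
  show ?thesis
  proof (cases "q = 0")
    case True thus ?thesis by simp
  next
    case False2: False
    with False have qn: "q < 0" by simp
    have "1 - 1/(-q) \<le> ln (-q)" using qn by (intro ln_lower) simp
    hence "1 + 1/q \<le> ln q" by (simp add: ln_minus)
    hence "q * ln q \<le> q * (1 + 1/q)" using qn by (simp add: mult_left_mono_neg)
    also have "\<dots> = q + 1" using qn by (simp add: field_simps)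
    also have "\<dots> \<le> (q - 1) + 2 * (q - 1)^2" using qn by (simp add: power2_eq_square algebra_simps)
    finally show ?thesis .
  qed
qed

lemma xlnx_lower:
  assumes q: "0 < (q::real)" "q \<le> M" and M: "1 \<le> M"
  shows "(q - 1) + (q - 1)^2 / (2*M) \<le> q * ln q"
proof -
  define f where "f = (\<lambda>x::real. x * ln x - (x - 1) - (x - 1)^2 / (2*M))"
  have d: "(f has_real_derivative (ln x - (x - 1)/M)) (at x)" if "0 < x" for x
    unfolding f_def using that M
    by (auto intro!: derivative_eq_intros simp: field_simps power2_eq_square)
  have f1: "f 1 = 0" by (simp add: f_def)
  have "f 1 \<le> f q"
  proof (cases "1 \<le> q")
    case True
    show ?thesis
    proof (rule DERIV_nonneg_imp_nondecreasing[OF True])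
      fix x assume x: "1 \<le> x" "x \<le> q"
      have "(x - 1)/M \<le> (x - 1)/x" using x q M by (intro divide_left_mono) auto
      also have "\<dots> = 1 - 1/x" using x by (simp add: field_simps)
      also have "\<dots> \<le> ln x" using x by (intro ln_lower) simp
      finally show "\<exists>y. (f has_real_derivative y) (at x) \<and> 0 \<le> y"
        using d[of x] x by (intro exI[of _ "ln x - (x - 1)/M"]) auto
    qed
  next
    case False
    show ?thesis
    proof (rule DERIV_nonpos_imp_nonincreasing[of q 1 f, simplified])
      show "q \<le> 1" using False by simp
      fix x assume x: "q \<le> x" "x \<le> 1"
      have "ln x \<le> x - 1" using x q by (intro ln_le_minus_one) simp
      also have "x - 1 \<le> (x - 1)/M"
      proof -
        have "0 \<le> (M - 1) * (1 - x)" using x M by simp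
        thus ?thesis using M by (simp add: field_simps algebra_simps)
      qed
      finally show "\<exists>y. (f has_real_derivative y) (at x) \<and> y \<le> 0"
        using d[of x] x q by (intro exI[of _ "ln x - (x - 1)/M"]) auto
    qed
  qed
  thus ?thesis using f1 by (simp add: f_def)
qed



lemma omega_sets[measurable]: "omega tor \<in> sets lborel"
  by (simp add: omega_def)

lemma C2_cont: "C2 U \<Longrightarrow> continuous_on UNIV U"
  unfolding C2_def
  by (meson continuous_at_imp_continuous_on differentiable_imp_continuous_within)

lemma pi_meas: "C2 U \<Longrightarrow> piU tor U \<in> borel_measurable lborel"
proof -
  assume "C2 U"
  hence [measurable]: "U \<in> borel_measurable lborel"
    using C2_cont[of U] borel_measurable_continuous_onI[of U] by (simp add: measurable_lborel1)
  show ?thesis unfolding piU_def[abs_def] by measurable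
qed

lemma pi_nonneg: "0 \<le> piU tor U x"
proof -
  have "0 \<le> Zc tor U" unfolding Zc_def set_lebesgue_integral_def
    by (intro integral_nonneg_AE) auto
  thus ?thesis unfolding piU_def by simp
qed

lemma pi_int:
  assumes "set_integrable lborel (omega tor) (\<lambda>x. exp (- U x))"
  shows "integrable lborel (\<lambda>x. indicator (omega tor) x * piU tor U x)"
proof -
  have "integrable lborel (\<lambda>x. indicator (omega tor) x * exp (- U x) / Zc tor U)"
    using assms unfolding set_integrable_def by (intro integrable_divide) simp
  thus ?thesis unfolding piU_def by simp
qed

lemma L2_sq_int:
  "inL2 tor U \<phi> \<Longrightarrow> integrable lborel (\<lambda>x. indicator (omega tor) x * ((\<phi> x)\<^sup>2 * piU tor U x))"
  unfolding inL2_def set_integrable_def by simp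

lemma L2_int:
  assumes "C2 U" "set_integrable lborel (omega tor) (\<lambda>x. exp (- U x))" "inL2 tor U \<phi>"
  shows "integrable lborel (\<lambda>x. indicator (omega tor) x * (\<phi> x * piU tor U x))"
proof (rule Bochner_Integration.integrable_bound)
  show "integrable lborel (\<lambda>x. indicator (omega tor) x * ((\<phi> x)\<^sup>2 * piU tor U x)
      + indicator (omega tor) x * piU tor U x)"
    using L2_sq_int[OF assms(3)] pi_int[OF assms(2)] by (rule Bochner_Integration.integrable_add)
  have [measurable]: "\<phi> \<in> borel_measurable lborel" using assms(3) by (simp add: inL2_def)
  have [measurable]: "piU tor U \<in> borel_measurable lborel" using pi_meas[OF assms(1)] .
  show "(\<lambda>x. indicator (omega tor) x * (\<phi> x * piU tor U x)) \<in> borel_measurable lborel"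
    by measurable
  show "AE x in lborel. norm (indicator (omega tor) x * (\<phi> x * piU tor U x))
     \<le> norm (indicator (omega tor) x * ((\<phi> x)\<^sup>2 * piU tor U x) + indicator (omega tor) x * piU tor U x)"
  proof (intro AE_I2)
    fix x
    have p: "0 \<le> piU tor U x" by (rule pi_nonneg)
    have a: "\<bar>\<phi> x\<bar> \<le> (\<phi> x)\<^sup>2 + 1"
    proof -
      have "0 \<le> (\<bar>\<phi> x\<bar> - 1/2)\<^sup>2" by simp
      also have "\<dots> = (\<phi> x)\<^sup>2 - \<bar>\<phi> x\<bar> + 1/4"
        by (simp add: power2_diff power2_abs power_divide)
      finally show ?thesis by simp
    qed
    have "\<bar>\<phi> x\<bar> * piU tor U x \<le> ((\<phi> x)\<^sup>2 + 1) * piU tor U x"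
      using a p by (rule mult_right_mono)
    thus "norm (indicator (omega tor) x * (\<phi> x * piU tor U x))
     \<le> norm (indicator (omega tor) x * ((\<phi> x)\<^sup>2 * piU tor U x) + indicator (omega tor) x * piU tor U x)"
      using p by (auto simp: indicator_def abs_mult distrib_right)
  qed
qed



lemma L2norm_sq:
  "(L2norm tor U \<phi>)\<^sup>2 = integral\<^sup>L lborel (\<lambda>x. indicator (omega tor) x * ((\<phi> x)\<^sup>2 * piU tor U x))"
proof -
  have "0 \<le> integral\<^sup>L lborel (\<lambda>x. indicator (omega tor) x * ((\<phi> x)\<^sup>2 * piU tor U x))"
    by (intro integral_nonneg_AE AE_I2) (simp add: pi_nonneg)
  thus ?thesis unfolding L2norm_def set_lebesgue_integral_def by simp
qed

lemma L2norm_nonneg: "0 \<le> L2norm tor U \<phi>"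
proof -
  have "0 \<le> integral\<^sup>L lborel (\<lambda>x. indicator (omega tor) x * ((\<phi> x)\<^sup>2 * piU tor U x))"
    by (intro integral_nonneg_AE AE_I2) (simp add: pi_nonneg)
  thus ?thesis unfolding L2norm_def set_lebesgue_integral_def by simp
qed

lemma Xsp_mean:
  "\<psi> \<in> Xsp tor U \<Longrightarrow> integral\<^sup>L lborel (\<lambda>x. indicator (omega tor) x * (\<psi> x * piU tor U x)) = 0"
  unfolding Xsp_def set_lebesgue_integral_def by simp

lemma E_upper:
  assumes U: "C2 U" "set_integrable lborel (omega tor) (\<lambda>x. exp (- U x))"
    and X: "(\<lambda>x. \<phi> x - 1) \<in> Xsp tor U"
  shows "entropy tor U \<phi> \<le> 2 * (L2norm tor U (\<lambda>x. \<phi> x - 1))\<^sup>2"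
proof -
  let ?I = "\<lambda>x. indicator (omega tor) x :: real"
  let ?p = "piU tor U"
  have L2: "inL2 tor U (\<lambda>x. \<phi> x - 1)" using X by (simp add: Xsp_def)
  have i1: "integrable lborel (\<lambda>x. ?I x * ((\<phi> x - 1) * ?p x))" by (rule L2_int[OF U L2])
  have i2: "integrable lborel (\<lambda>x. ?I x * ((\<phi> x - 1)\<^sup>2 * ?p x))" by (rule L2_sq_int[OF L2])
  have m: "integral\<^sup>L lborel (\<lambda>x. ?I x * ((\<phi> x - 1) * ?p x)) = 0" by (rule Xsp_mean[OF X])
  have n: "(L2norm tor U (\<lambda>x. \<phi> x - 1))\<^sup>2 = integral\<^sup>L lborel (\<lambda>x. ?I x * ((\<phi> x - 1)\<^sup>2 * ?p x))"
    by (rule L2norm_sq)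
  have nn: "0 \<le> (L2norm tor U (\<lambda>x. \<phi> x - 1))\<^sup>2" by simp
  show ?thesis
  proof (cases "integrable lborel (\<lambda>x. ?I x * (\<phi> x * ln (\<phi> x) * ?p x))")
    case True
    have "entropy tor U \<phi> = integral\<^sup>L lborel (\<lambda>x. ?I x * (\<phi> x * ln (\<phi> x) * ?p x))"
      unfolding entropy_def set_lebesgue_integral_def by simp
    also have "\<dots> \<le> integral\<^sup>L lborel (\<lambda>x. ?I x * ((\<phi> x - 1) * ?p x) + 2 * (?I x * ((\<phi> x - 1)\<^sup>2 * ?p x)))"
    proof (rule integral_mono[OF True])
      show "integrable lborel (\<lambda>x. ?I x * ((\<phi> x - 1) * ?p x) + 2 * (?I x * ((\<phi> x - 1)\<^sup>2 * ?p x)))"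
        using i1 i2 by simp
      fix x
      have "\<phi> x * ln (\<phi> x) * ?p x \<le> ((\<phi> x - 1) + 2 * (\<phi> x - 1)\<^sup>2) * ?p x"
        by (rule mult_right_mono[OF xlnx_upper pi_nonneg])
      thus "?I x * (\<phi> x * ln (\<phi> x) * ?p x) \<le> ?I x * ((\<phi> x - 1) * ?p x) + 2 * (?I x * ((\<phi> x - 1)\<^sup>2 * ?p x))"
        by (auto simp: indicator_def algebra_simps)
    qed
    also have "\<dots> = 2 * (L2norm tor U (\<lambda>x. \<phi> x - 1))\<^sup>2"
      using i1 i2 m n by simp
    finally show ?thesis .
  next
    case False
    have "entropy tor U \<phi> = 0"
      unfolding entropy_def set_lebesgue_integral_def using False
      by (simp add: not_integrable_integral_eq)
    thus ?thesis using nn by simp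
  qed
qed

lemma E_lower:
  assumes U: "C2 U" "set_integrable lborel (omega tor) (\<lambda>x. exp (- U x))"
    and X: "(\<lambda>x. q0 x - 1) \<in> Xsp tor U"
    and c1: "0 < c1" and b: "\<forall>x. c1 \<le> q0 x \<and> q0 x \<le> c2"
  shows "(L2norm tor U (\<lambda>x. q0 x - 1))\<^sup>2 / (2 * max c2 1) \<le> entropy tor U q0"
proof -
  let ?I = "\<lambda>x. indicator (omega tor) x :: real"
  let ?p = "piU tor U"
  define M where "M = max c2 1"
  have M1: "1 \<le> M" by (simp add: M_def)
  have L2: "inL2 tor U (\<lambda>x. q0 x - 1)" using X by (simp add: Xsp_def)
  have i1: "integrable lborel (\<lambda>x. ?I x * ((q0 x - 1) * ?p x))" by (rule L2_int[OF U L2])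
  have i2: "integrable lborel (\<lambda>x. ?I x * ((q0 x - 1)\<^sup>2 * ?p x))" by (rule L2_sq_int[OF L2])
  have m: "integral\<^sup>L lborel (\<lambda>x. ?I x * ((q0 x - 1) * ?p x)) = 0" by (rule Xsp_mean[OF X])
  have n: "(L2norm tor U (\<lambda>x. q0 x - 1))\<^sup>2 = integral\<^sup>L lborel (\<lambda>x. ?I x * ((q0 x - 1)\<^sup>2 * ?p x))"
    by (rule L2norm_sq)
  have [measurable]: "(\<lambda>x. q0 x - 1) \<in> borel_measurable lborel" using L2 by (simp add: inL2_def)
  hence [measurable]: "q0 \<in> borel_measurable lborel"
    using borel_measurable_add[of "\<lambda>x. q0 x - 1" lborel "\<lambda>x. 1"] by simp
  have [measurable]: "?p \<in> borel_measurable lborel" by (rule pi_meas[OF U(1)])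
  define K where "K = c2 * (\<bar>ln c1\<bar> + \<bar>ln c2\<bar>)"
  have ient: "integrable lborel (\<lambda>x. ?I x * (q0 x * ln (q0 x) * ?p x))"
  proof (rule Bochner_Integration.integrable_bound)
    show "integrable lborel (\<lambda>x. K * (?I x * ?p x))"
      using pi_int[OF U(2)] by simp
    show "(\<lambda>x. ?I x * (q0 x * ln (q0 x) * ?p x)) \<in> borel_measurable lborel" by measurable
    show "AE x in lborel. norm (?I x * (q0 x * ln (q0 x) * ?p x)) \<le> norm (K * (?I x * ?p x))"
    proof (intro AE_I2)
      fix x
      have q: "c1 \<le> q0 x" "q0 x \<le> c2" using b by auto
      have qp: "0 < q0 x" using q c1 by simp
      have "ln c1 \<le> ln (q0 x)" "ln (q0 x) \<le> ln c2" using q c1 qp by auto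
      hence l: "\<bar>ln (q0 x)\<bar> \<le> \<bar>ln c1\<bar> + \<bar>ln c2\<bar>" by linarith
      have "\<bar>q0 x\<bar> * \<bar>ln (q0 x)\<bar> \<le> c2 * (\<bar>ln c1\<bar> + \<bar>ln c2\<bar>)"
        using q qp l by (intro mult_mono) auto
      hence "\<bar>q0 x\<bar> * \<bar>ln (q0 x)\<bar> * ?p x \<le> K * ?p x"
        unfolding K_def by (rule mult_right_mono) (rule pi_nonneg)
      moreover have "0 \<le> K" unfolding K_def using q c1 by simp
      ultimately show "norm (?I x * (q0 x * ln (q0 x) * ?p x)) \<le> norm (K * (?I x * ?p x))"
        using pi_nonneg[of tor U x] by (auto simp: indicator_def abs_mult)
    qed
  qed
  have "integral\<^sup>L lborel (\<lambda>x. ?I x * ((q0 x - 1) * ?p x) + (1 / (2*M)) * (?I x * ((q0 x - 1)\<^sup>2 * ?p x)))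
      \<le> integral\<^sup>L lborel (\<lambda>x. ?I x * (q0 x * ln (q0 x) * ?p x))"
  proof (rule integral_mono[OF _ ient])
    show "integrable lborel (\<lambda>x. ?I x * ((q0 x - 1) * ?p x) + (1 / (2*M)) * (?I x * ((q0 x - 1)\<^sup>2 * ?p x)))"
      using i1 i2 by simp
    fix x
    have q: "0 < q0 x" "q0 x \<le> M" using b[rule_format, of x] c1 unfolding M_def by auto
    have "((q0 x - 1) + (q0 x - 1)\<^sup>2 / (2*M)) * ?p x \<le> q0 x * ln (q0 x) * ?p x"
      by (rule mult_right_mono[OF xlnx_lower[OF q M1] pi_nonneg])
    thus "?I x * ((q0 x - 1) * ?p x) + (1 / (2*M)) * (?I x * ((q0 x - 1)\<^sup>2 * ?p x)) \<le> ?I x * (q0 x * ln (q0 x) * ?p x)"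
      by (auto simp: indicator_def algebra_simps)
  qed
  moreover have "integral\<^sup>L lborel (\<lambda>x. ?I x * ((q0 x - 1) * ?p x) + (1 / (2*M)) * (?I x * ((q0 x - 1)\<^sup>2 * ?p x)))
     = (L2norm tor U (\<lambda>x. q0 x - 1))\<^sup>2 / (2 * M)"
    using i1 i2 m n by simp
  moreover have "entropy tor U q0 = integral\<^sup>L lborel (\<lambda>x. ?I x * (q0 x * ln (q0 x) * ?p x))"
    unfolding entropy_def set_lebesgue_integral_def by simp
  ultimately show ?thesis unfolding M_def by simp
qed



lemma frechet_shift:
  assumes "f differentiable (at x)"
  shows "frechet_derivative (\<lambda>y. f y - c) (at x) = frechet_derivative f (at x)"
proof -
  have "(f has_derivative frechet_derivative f (at x)) (at x)"
    using assms frechet_derivative_works by blast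
  hence "((\<lambda>y. f y - c) has_derivative (\<lambda>h. frechet_derivative f (at x) h - 0)) (at x)"
    by (intro has_derivative_diff has_derivative_const)
  hence "((\<lambda>y. f y - c) has_derivative frechet_derivative f (at x)) (at x)" by simp
  thus ?thesis by (rule frechet_derivative_at[symmetric])
qed

lemma pderiv_shift:
  assumes "\<forall>x. f differentiable (at x)"
  shows "pderiv (\<lambda>y. f y - c) = pderiv f"
  using assms by (intro ext) (simp add: pderiv_def frechet_shift)

lemma C2_shift:
  assumes "C2 f"
  shows "C2 (\<lambda>y. f y - c)" "grad (\<lambda>y. f y - c) = grad f" "lap (\<lambda>y. f y - c) = lap f"
proof -
  have d: "\<forall>x. f differentiable (at x)" using assms by (simp add: C2_def)
  have p: "pderiv (\<lambda>y. f y - c) = pderiv f" by (rule pderiv_shift[OF d])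
  have "(\<lambda>y. f y - c) differentiable (at x)" for x
    using d by (intro differentiable_diff) auto
  thus "C2 (\<lambda>y. f y - c)" using assms unfolding C2_def p by simp
  show "grad (\<lambda>y. f y - c) = grad f" unfolding grad_def[abs_def] p ..
  show "lap (\<lambda>y. f y - c) = lap f" unfolding lap_def[abs_def] p ..
qed

lemma inL2_shift:
  assumes U: "C2 U" "set_integrable lborel (omega tor) (\<lambda>x. exp (- U x))"
    and L: "inL2 tor U \<phi>"
  shows "inL2 tor U (\<lambda>x. \<phi> x - 1)"
proof -
  let ?I = "\<lambda>x. indicator (omega tor) x :: real"
  let ?p = "piU tor U"
  have [measurable]: "\<phi> \<in> borel_measurable lborel" using L by (simp add: inL2_def)
  have [measurable]: "?p \<in> borel_measurable lborel" by (rule pi_meas[OF U(1)])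
  have per: "tor \<longrightarrow> periodic (\<lambda>x. \<phi> x - 1)" using L by (simp add: inL2_def periodic_def)
  have "integrable lborel (\<lambda>x. ?I x * ((\<phi> x - 1)\<^sup>2 * ?p x))"
  proof (rule Bochner_Integration.integrable_bound)
    show "integrable lborel (\<lambda>x. 2 * (?I x * ((\<phi> x)\<^sup>2 * ?p x)) + 2 * (?I x * ?p x))"
      using L2_sq_int[OF L] pi_int[OF U(2)] by simp
    show "(\<lambda>x. ?I x * ((\<phi> x - 1)\<^sup>2 * ?p x)) \<in> borel_measurable lborel" by measurable
    show "AE x in lborel. norm (?I x * ((\<phi> x - 1)\<^sup>2 * ?p x)) \<le> norm (2 * (?I x * ((\<phi> x)\<^sup>2 * ?p x)) + 2 * (?I x * ?p x))"
    proof (intro AE_I2)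
      fix x
      have pp: "0 \<le> ?p x" by (rule pi_nonneg)
      have "(\<phi> x - 1)\<^sup>2 \<le> 2 * (\<phi> x)\<^sup>2 + 2"
      proof -
        have "0 \<le> (\<phi> x + 1)\<^sup>2" by simp
        thus ?thesis by (simp add: power2_eq_square algebra_simps)
      qed
      hence "(\<phi> x - 1)\<^sup>2 * ?p x \<le> (2 * (\<phi> x)\<^sup>2 + 2) * ?p x" using pp by (rule mult_right_mono)
      thus "norm (?I x * ((\<phi> x - 1)\<^sup>2 * ?p x)) \<le> norm (2 * (?I x * ((\<phi> x)\<^sup>2 * ?p x)) + 2 * (?I x * ?p x))"
        using pp by (auto simp: indicator_def algebra_simps)
    qed
  qed
  thus ?thesis using per unfolding inL2_def set_integrable_def by simp
qed

lemma sol_shift: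
  assumes U: "C2 U" "set_integrable lborel (omega tor) (\<lambda>x. exp (- U x))"
    and S: "is_sol tor U v A q"
  shows "is_sol tor U v A (\<lambda>s x. q s x - 1)"
  unfolding is_sol_def
proof (intro conjI allI impI)
  fix t :: real
  assume "0 \<le> t"
  thus "inL2 tor U (\<lambda>x. q t x - 1)" using S inL2_shift[OF U] by (simp add: is_sol_def)
next
  fix t :: real
  assume "0 \<le> t"
  thus "((\<lambda>s. L2norm tor U (\<lambda>x. q s x - 1 - (q t x - 1))) \<longlongrightarrow> 0) (at t within {0..})"
    using S by (simp add: is_sol_def)
next
  fix t :: real
  assume "0 < t"
  hence "C2 (q t)" using S by (simp add: is_sol_def)
  thus "C2 (\<lambda>x. q t x - 1)" by (rule C2_shift(1))
next
  fix t :: real and x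
  assume t: "0 < t"
  hence c: "C2 (q t)" using S by (simp add: is_sol_def)
  have "((\<lambda>s. q s x) has_real_derivative
          (lap (q t) x - grad U x \<bullet> grad (q t) x - A * (v x \<bullet> grad (q t) x))) (at t)"
    using S t by (simp add: is_sol_def)
  hence "((\<lambda>s. q s x - 1) has_real_derivative
          (lap (q t) x - grad U x \<bullet> grad (q t) x - A * (v x \<bullet> grad (q t) x)) - 0) (at t)"
    by (intro DERIV_diff DERIV_const)
  thus "((\<lambda>s. q s x - 1) has_real_derivative
          (lap (\<lambda>x. q t x - 1) x - grad U x \<bullet> grad (\<lambda>x. q t x - 1) x - A * (v x \<bullet> grad (\<lambda>x. q t x - 1) x))) (at t)"
    using C2_shift[OF c] by simp
qed



theorem mainTheorem1:
  fixes tor :: bool and U :: "'a::euclidean_space \<Rightarrow> real" and v :: "'a \<Rightarrow> 'a"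
    and Y :: "('a \<Rightarrow> real) set" and q0 :: "'a \<Rightarrow> real" and c1 c2 :: real
  assumes U_C2: "C2 U"
    and U_per: "tor \<longrightarrow> periodic U"
    and U_int: "set_integrable lborel (omega tor) (\<lambda>x. exp (- U x))"
    and U_conf: "\<not> tor \<longrightarrow>
        filterlim (\<lambda>x. (norm (grad U x))\<^sup>2 / 2 - lap U x) at_top at_infinity"
    and v_C1: "C1_field v"
    and v_per: "tor \<longrightarrow> periodic v"
    and v_flow: "\<forall>x. divg (\<lambda>y. exp (- U y) *\<^sub>R v y) x = 0"
    and Y_sub: "closed_subspace tor U Y"
    and Y_inv: "\<forall>A\<ge>0. \<forall>q. is_sol tor U v A q \<and> q 0 \<in> Y \<longrightarrow> (\<forall>t\<ge>0. q t \<in> Y)"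
    and v_RE: "relax_enh tor U v Y"
    and q0_dens: "(LINT x:omega tor|lborel. q0 x * piU tor U x) = 1"
    and c1_pos: "0 < c1"
    and q0_bnd: "\<forall>x. c1 \<le> q0 x \<and> q0 x \<le> c2"
    and q0_Y: "(\<lambda>x. q0 x - 1) \<in> Y"
  shows "\<forall>B>0. \<forall>t>0. \<exists>A0. \<forall>A>A0. \<forall>q. is_sol tor U v A q \<and> q 0 = q0 \<longrightarrow>
           entropy tor U (q t) \<le> entropy tor U q0 * exp (- B * t)"
proof (intro allI impI)
  fix B t :: real
  assume B: "B > 0" and t: "t > 0"
  define M where "M = max c2 1"
  define k where "k = 1 / (2 * M)"
  define \<delta> where "\<delta> = sqrt (k * exp (- B * t) / 2)"
  have M1: "1 \<le> M" by (simp add: M_def)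
  have kpos: "0 < k" using M1 by (simp add: k_def)
  have dpos: "0 < \<delta>" using kpos by (simp add: \<delta>_def)
  have d2: "\<delta>\<^sup>2 = k * exp (- B * t) / 2" using kpos by (simp add: \<delta>_def)
  have YX: "Y \<subseteq> Xsp tor U" using Y_sub by (simp add: closed_subspace_def)
  obtain A1 where A1: "A1 > 0" and HA: "\<forall>A\<ge>A1. \<exists>c<\<delta>. \<forall>q. is_sol tor U v A q \<and> q 0 \<in> Y
        \<longrightarrow> L2norm tor U (q t) \<le> c * L2norm tor U (q 0)"
    using v_RE t dpos unfolding relax_enh_def by blast
  show "\<exists>A0. \<forall>A>A0. \<forall>q. is_sol tor U v A q \<and> q 0 = q0 \<longrightarrow>
           entropy tor U (q t) \<le> entropy tor U q0 * exp (- B * t)"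
  proof (intro exI[of _ A1] allI impI)
    fix A q
    assume A: "A > A1" and Q: "is_sol tor U v A q \<and> q 0 = q0"
    define r where "r = (\<lambda>s x. q s x - 1)"
    have rs: "is_sol tor U v A r" unfolding r_def using sol_shift[OF U_C2 U_int] Q by blast
    have r0: "r 0 = (\<lambda>x. q0 x - 1)" using Q by (simp add: r_def)
    have r0Y: "r 0 \<in> Y" using r0 q0_Y by simp
    obtain c where c: "c < \<delta>" and cb: "\<forall>q. is_sol tor U v A q \<and> q 0 \<in> Y
        \<longrightarrow> L2norm tor U (q t) \<le> c * L2norm tor U (q 0)"
      using HA A by (meson less_imp_le)
    have Nt: "L2norm tor U (r t) \<le> c * L2norm tor U (r 0)" using cb rs r0Y by blast
    have A0: "A \<ge> 0" using A A1 by simp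
    have rtY: "r t \<in> Y" using Y_inv[rule_format, OF A0, of r] rs r0Y t by simp
    hence rtX: "(\<lambda>x. q t x - 1) \<in> Xsp tor U" using YX by (auto simp: r_def)
    define N0 where "N0 = L2norm tor U (\<lambda>x. q0 x - 1)"
    define N1 where "N1 = L2norm tor U (\<lambda>x. q t x - 1)"
    have N0n: "0 \<le> N0" by (simp add: N0_def L2norm_nonneg)
    have N1n: "0 \<le> N1" by (simp add: N1_def L2norm_nonneg)
    have "N1 \<le> c * N0" using Nt r0 by (simp add: N0_def N1_def r_def)
    also have "\<dots> \<le> \<delta> * N0" using c N0n by (simp add: mult_right_mono)
    finally have "N1 \<le> \<delta> * N0" .
    hence "N1\<^sup>2 \<le> (\<delta> * N0)\<^sup>2" using N1n by (simp add: power_mono)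
    hence sq: "N1\<^sup>2 \<le> k * exp (- B * t) / 2 * N0\<^sup>2" by (simp add: power_mult_distrib d2)
    have "entropy tor U (q t) \<le> 2 * N1\<^sup>2"
      unfolding N1_def by (rule E_upper[OF U_C2 U_int rtX])
    also have "\<dots> \<le> exp (- B * t) * (k * N0\<^sup>2)" using sq by (simp add: algebra_simps)
    also have "\<dots> \<le> exp (- B * t) * entropy tor U q0"
    proof (rule mult_left_mono)
      have "(L2norm tor U (\<lambda>x. q0 x - 1))\<^sup>2 / (2 * max c2 1) \<le> entropy tor U q0"
        using YX q0_Y by (intro E_lower[OF U_C2 U_int _ c1_pos q0_bnd]) auto
      thus "k * N0\<^sup>2 \<le> entropy tor U q0" by (simp add: k_def M_def N0_def)
    qed simp
    finally show "entropy tor U (q t) \<le> entropy tor U q0 * exp (- B * t)" by (simp add: mult.commute)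
  qed
qed


end
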